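(* Let $n,r\ge1$, $A_{-1}\in\mathbb{R}^{n\times n}$, $B\in\mathbb{R}^{n\times r}$, and let $A_2,A_3$ be $n\times n$ matrix functions on $[-1,0]$ with entries in $L_2([-1,0],\mathbb{C})$. For a matrix $M\in\mathbb{C}^{n\times n}$ define $$\Delta_M(\lambda)=\lambda I-\lambda e^{-\lambda}M-\lambda\int_{-1}^0e^{\lambda s}A_2(s)\,ds-\int_{-1}^0e^{\lambda s}A_3(s)\,ds,\quad\lambda\in\mathbb{C}.$$ Say that a pair $(M,B)$ satisfies conditions (i) and (ii) if: (i) $\operatorname{rank}(\Delta_M(\lambda)\ \ B)=n$ for every $\lambda\in\mathbb{C}$ (equivalently, there are no $\lambda\in\mathbb{C}$ and $y\in\mathbb{C}^n\setminus\{0\}$ with $\Delta_M(\lambda)^*y=0$ and $B^*y=0$); (ii) $\operatorname{rank}(B\ \ MB\ \cdots\ M^{n-1}B)=n$. If $(A_{-1},B)$ satisfies conditions (i) and (ii), then for every matrix $P\in\mathbb{C}^{r\times n}$ the pair $(A_{-1}+BP,B)$ satisfies conditions (i) and (ii) (with the same $A_2,A_3$). *)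

theory Defs
  imports "HOL-Analysis.Analysis" "Jordan_Normal_Form.DL_Rank"
begin

definition L2_on_unit :: "(real \<Rightarrow> complex) \<Rightarrow> bool" where
  "L2_on_unit f \<longleftrightarrow> f measurable_on {-1..0} \<and> (\<lambda>s. (cmod (f s))^2) integrable_on {-1..0}"

definition L2_matfun :: "nat \<Rightarrow> (real \<Rightarrow> complex mat) \<Rightarrow> bool" where
  "L2_matfun n A \<longleftrightarrow> (\<forall>s\<in>{-1..0}. A s \<in> carrier_mat n n) \<and>
     (\<forall>i<n. \<forall>j<n. L2_on_unit (\<lambda>s. A s $$ (i,j)))"

definition exp_int :: "nat \<Rightarrow> (real \<Rightarrow> complex mat) \<Rightarrow> complex \<Rightarrow> complex mat" where
  "exp_int n A l = Matrix.mat n n (\<lambda>(i,j). integral {-1..0} (\<lambda>s. exp (l * complex_of_real s) * A s $$ (i,j)))"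

definition Delta :: "nat \<Rightarrow> (real \<Rightarrow> complex mat) \<Rightarrow> (real \<Rightarrow> complex mat) \<Rightarrow> complex mat \<Rightarrow> complex \<Rightarrow> complex mat" where
  "Delta n A2 A3 M l = l \<cdot>\<^sub>m 1\<^sub>m n - (l * exp (- l)) \<cdot>\<^sub>m M - l \<cdot>\<^sub>m exp_int n A2 l - exp_int n A3 l"

definition hjoin :: "'a mat \<Rightarrow> 'a mat \<Rightarrow> 'a mat" where
  "hjoin A B = Matrix.mat (dim_row A) (dim_col A + dim_col B)
     (\<lambda>(i,j). if j < dim_col A then A $$ (i,j) else B $$ (i, j - dim_col A))"

text \<open>Kalman controllability matrix (B  MB  ...  M^(n-1) B), of size n x (n r).\<close>
definition ctrb :: "nat \<Rightarrow> nat \<Rightarrow> 'a::comm_ring_1 mat \<Rightarrow> 'a mat \<Rightarrow> 'a mat" where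
  "ctrb n r M B = Matrix.mat n (n * r) (\<lambda>(i,j). ((M ^\<^sub>m (j div r)) * B) $$ (i, j mod r))"

definition cond_i :: "nat \<Rightarrow> (real \<Rightarrow> complex mat) \<Rightarrow> (real \<Rightarrow> complex mat) \<Rightarrow> complex mat \<Rightarrow> complex mat \<Rightarrow> bool" where
  "cond_i n A2 A3 M B \<longleftrightarrow> (\<forall>l::complex. vec_space.rank n (hjoin (Delta n A2 A3 M l) B) = n)"

definition cond_ii :: "nat \<Rightarrow> nat \<Rightarrow> complex mat \<Rightarrow> complex mat \<Rightarrow> bool" where
  "cond_ii n r M B \<longleftrightarrow> vec_space.rank n (ctrb n r M B) = n"

end

theory Submission
  imports Defs
begin

context vec_space begin

lemma rank_eq_spans:
  assumes A: "A \<in> carrier_mat n a" and A': "A' \<in> carrier_mat n a'"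
    and s1: "set (cols A) \<subseteq> span (set (cols A'))"
    and s2: "set (cols A') \<subseteq> span (set (cols A))"
  shows "rank A = rank A'"
proof -
  have c1: "set (cols A) \<subseteq> carrier_vec n" using A cols_dim by blast
  have c2: "set (cols A') \<subseteq> carrier_vec n" using A' cols_dim by blast
  have "span (set (cols A)) \<subseteq> span (set (cols A'))" by (rule span_subsetI[OF c2 s1])
  moreover have "span (set (cols A')) \<subseteq> span (set (cols A))" by (rule span_subsetI[OF c1 s2])
  ultimately show ?thesis unfolding rank_def by simp
qed

lemma mult_in_span:
  assumes A: "A \<in> carrier_mat n n" and S: "S \<subseteq> carrier_vec n" and U: "U \<subseteq> carrier_vec n"
    and img: "\<And>s. s \<in> S \<Longrightarrow> A *\<^sub>v s \<in> span U"
    and w: "w \<in> span S"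
  shows "A *\<^sub>v w \<in> span U"
proof -
  from in_spanE[OF w] obtain c F where wF: "w = lincomb c F" "finite F" "F \<subseteq> S" by blast
  have "F \<subseteq> S \<Longrightarrow> A *\<^sub>v lincomb c F \<in> span U" using wF(2)
  proof (induct F rule: finite_induct)
    case empty
    have "A *\<^sub>v 0\<^sub>v n = 0\<^sub>v n" using A by auto
    moreover have "0\<^sub>v n \<in> span U" by (rule in_spanI[of _ c "{}"]) (auto simp: lincomb_def)
    ultimately show ?case unfolding lincomb_def by auto
  next
    case (insert x F)
    have xc: "x \<in> carrier_vec n" using insert S by auto
    have Fc: "F \<subseteq> carrier_vec n" using insert S by auto
    have lc: "lincomb c F \<in> carrier_vec n" using Fc insert(1) lincomb_closed by auto
    have "lincomb c (insert x F) = c x \<cdot>\<^sub>v x + lincomb c F"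
      unfolding lincomb_def using insert xc Fc by (subst M.finsum_insert) auto
    hence "A *\<^sub>v lincomb c (insert x F) = c x \<cdot>\<^sub>v (A *\<^sub>v x) + A *\<^sub>v lincomb c F"
      using A xc lc by (simp add: mult_add_distrib_mat_vec mult_mat_vec)
    moreover have "c x \<cdot>\<^sub>v (A *\<^sub>v x) \<in> span U"
      using smult_in_span[OF U img] insert by auto
    moreover have "A *\<^sub>v lincomb c F \<in> span U" using insert by auto
    ultimately show ?case using span_add1[OF U] by auto
  qed
  then show ?thesis using wF by auto
qed

lemma mv_in_span:
  assumes B: "B \<in> carrier_mat n r" and x: "x \<in> carrier_vec r"
    and T: "T \<subseteq> carrier_vec n" and sub: "set (cols B) \<subseteq> T"
  shows "B *\<^sub>v x \<in> span T"
proof -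
  have "B *\<^sub>v x \<in> col_space B" using col_space_eq[OF B] B x by auto
  hence "B *\<^sub>v x \<in> span (set (cols B))" unfolding col_space_def .
  moreover have "span (set (cols B)) \<subseteq> span T"
    by (rule span_subsetI[OF T]) (use sub T in_own_span in blast)
  ultimately show ?thesis by blast
qed

lemma set_cols_hjoin:
  assumes D: "D \<in> carrier_mat n m" and B: "B \<in> carrier_mat n r"
  shows "set (cols (hjoin D B)) = set (cols D) \<union> set (cols B)"
proof -
  have colj: "col (hjoin D B) j = (if j < m then col D j else col B (j - m))" if "j < m + r" for j
    using that D B by (auto simp: hjoin_def intro!: eq_vecI)
  show ?thesis
  proof (intro Set.set_eqI iffI)
    fix v assume "v \<in> set (cols (hjoin D B))"
    then obtain j where j: "j < m + r" "v = col (hjoin D B) j"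
      using D B by (auto simp: cols_def hjoin_def)
    then show "v \<in> set (cols D) \<union> set (cols B)" using colj[OF j(1)] D B
      by (auto simp: cols_def split: if_splits)
  next
    fix v assume "v \<in> set (cols D) \<union> set (cols B)"
    then consider j where "j < m" "v = col D j" | j where "j < r" "v = col B j"
      using D B by (auto simp: cols_def)
    then show "v \<in> set (cols (hjoin D B))"
    proof cases
      case 1
      then show ?thesis using colj[of j] D B
        by (auto simp: cols_def hjoin_def intro!: image_eqI[of _ _ j])
    next
      case 2
      then show ?thesis using colj[of "j + m"] D B
        by (auto simp: cols_def hjoin_def intro!: image_eqI[of _ _ "j+m"])
    qed
  qed
qed

lemma hjoin_carrier: "D \<in> carrier_mat n m \<Longrightarrow> B \<in> carrier_mat n r \<Longrightarrow> hjoin D B \<in> carrier_mat n (m + r)"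
  by (auto simp: hjoin_def)

lemma hjoin_incl:
  assumes D: "D \<in> carrier_mat n n" and B: "B \<in> carrier_mat n r" and Q: "Q \<in> carrier_mat r n"
  shows "set (cols (hjoin (D + B * Q) B)) \<subseteq> span (set (cols (hjoin D B)))"
proof -
  let ?T = "set (cols (hjoin D B))"
  have T: "?T \<subseteq> carrier_vec n" using hjoin_carrier[OF D B] cols_dim by blast
  have TT: "?T = set (cols D) \<union> set (cols B)" by (rule set_cols_hjoin[OF D B])
  have DBQ: "D + B * Q \<in> carrier_mat n n" using D B Q by auto
  have "set (cols (hjoin (D + B * Q) B)) = set (cols (D + B * Q)) \<union> set (cols B)"
    by (rule set_cols_hjoin[OF DBQ B])
  moreover have "set (cols B) \<subseteq> span ?T" using TT T in_own_span by blast
  moreover have "set (cols (D + B * Q)) \<subseteq> span ?T"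
  proof
    fix v assume "v \<in> set (cols (D + B * Q))"
    then obtain j where j: "j < n" "v = col (D + B * Q) j" using DBQ by (auto simp: cols_def)
    have "v = col D j + B *\<^sub>v col Q j" using j D B Q by auto
    moreover have "col D j \<in> ?T" using TT j D by (auto simp: cols_def)
    hence "col D j \<in> span ?T" using T in_own_span by blast
    moreover have "B *\<^sub>v col Q j \<in> span ?T"
      by (rule mv_in_span[OF B _ T]) (use Q j TT in auto)
    ultimately show "v \<in> span ?T" using span_add1[OF T] by auto
  qed
  ultimately show ?thesis by blast
qed

lemma rank_hjoin_add:
  assumes D: "D \<in> carrier_mat n n" and B: "B \<in> carrier_mat n r" and Q: "Q \<in> carrier_mat r n"
  shows "rank (hjoin (D + B * Q) B) = rank (hjoin D B)"
proof -
  have DBQ: "D + B * Q \<in> carrier_mat n n" using D B Q by auto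
  have Q': "(-1) \<cdot>\<^sub>m Q \<in> carrier_mat r n" using Q by auto
  have eq: "(D + B * Q) + B * ((-1) \<cdot>\<^sub>m Q) = D"
    using D B Q by (subst mult_smult_distrib[OF B Q]) (auto intro!: eq_matI)
  show ?thesis
    apply (rule rank_eq_spans[OF hjoin_carrier[OF DBQ B] hjoin_carrier[OF D B]])
     apply (rule hjoin_incl[OF D B Q])
    using hjoin_incl[OF DBQ B Q'] eq by simp
qed

lemma pow_Suc_left: "X \<in> carrier_mat n n \<Longrightarrow> X ^\<^sub>m Suc k = X * X ^\<^sub>m k"
proof (induct k)
  case 0 then show ?case by auto
next
  case (Suc k)
  have "X ^\<^sub>m Suc (Suc k) = (X * X ^\<^sub>m k) * X" using Suc by simp
  also have "\<dots> = X * (X ^\<^sub>m k * X)" using Suc by (subst assoc_mult_mat) auto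
  finally show ?case by simp
qed

definition Tset :: "nat \<Rightarrow> nat \<Rightarrow> 'a mat \<Rightarrow> 'a mat \<Rightarrow> 'a vec set" where
  "Tset r k M B = {col (M ^\<^sub>m j * B) a | j a. j \<le> k \<and> a < r}"

lemma Tset_carrier: "M \<in> carrier_mat n n \<Longrightarrow> B \<in> carrier_mat n r \<Longrightarrow> Tset r k M B \<subseteq> carrier_vec n"
proof
  fix x assume "M \<in> carrier_mat n n" "B \<in> carrier_mat n r" "x \<in> Tset r k M B"
  then obtain j a where "x = col (M ^\<^sub>m j * B) a" "dim_row (M ^\<^sub>m j * B) = n"
    unfolding Tset_def by auto
  then show "x \<in> carrier_vec n" using col_dim[of "M ^\<^sub>m j * B" a] by simp
qed

lemma TsetI: "j \<le> k \<Longrightarrow> a < r \<Longrightarrow> col (M ^\<^sub>m j * B) a \<in> Tset r k M B"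
  unfolding Tset_def by blast

lemma ctrb_step:
  assumes M: "M \<in> carrier_mat n n" and B: "B \<in> carrier_mat n r" and P: "P \<in> carrier_mat r n"
  shows "k < n \<Longrightarrow> a < r \<Longrightarrow> col ((M + B * P) ^\<^sub>m k * B) a \<in> span (Tset r k M B)"
proof (induct k arbitrary: a)
  case 0
  have "col ((M + B * P) ^\<^sub>m 0 * B) a = col (M ^\<^sub>m 0 * B) a" using M B P by simp
  hence "col ((M + B * P) ^\<^sub>m 0 * B) a \<in> Tset r 0 M B" using 0 TsetI[of 0 0 a r M B] by simp
  then show ?case using in_own_span Tset_carrier[OF M B] by blast
next
  case (Suc k)
  let ?M' = "M + B * P"
  have M': "?M' \<in> carrier_mat n n" using M B P by auto
  let ?w = "col (?M' ^\<^sub>m k * B) a"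
  have T: "Tset r (Suc k) M B \<subseteq> carrier_vec n" by (rule Tset_carrier[OF M B])
  have T0: "Tset r k M B \<subseteq> carrier_vec n" by (rule Tset_carrier[OF M B])
  have wspan: "?w \<in> span (Tset r k M B)" by (rule Suc.hyps) (use Suc.prems in auto)
  have "dim_row (?M' ^\<^sub>m k * B) = n" using M' B by simp
  hence w: "?w \<in> carrier_vec n" using col_dim[of "?M' ^\<^sub>m k * B" a] by simp
  have "?M' ^\<^sub>m Suc k * B = ?M' * (?M' ^\<^sub>m k * B)"
    by (subst pow_Suc_left[OF M'], rule assoc_mult_mat) (use M' B in auto)
  moreover have X: "?M' ^\<^sub>m k * B \<in> carrier_mat n r" using mult_carrier_mat[OF pow_carrier_mat[OF M'] B] by simp
  ultimately have "col (?M' ^\<^sub>m Suc k * B) a = ?M' *\<^sub>v ?w" using col_mult2[OF M' X Suc.prems(2)] by simp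
  also have "\<dots> = M *\<^sub>v ?w + B *\<^sub>v (P *\<^sub>v ?w)"
    using M B P w by (simp add: add_mult_distrib_mat_vec[OF M _ w])
  finally have eq: "col (?M' ^\<^sub>m Suc k * B) a = M *\<^sub>v ?w + B *\<^sub>v (P *\<^sub>v ?w)" .
  have 1: "M *\<^sub>v ?w \<in> span (Tset r (Suc k) M B)"
  proof (rule mult_in_span[OF M T0 T _ wspan])
    fix s assume "s \<in> Tset r k M B"
    then obtain j b where jb: "j \<le> k" "b < r" "s = col (M ^\<^sub>m j * B) b" unfolding Tset_def by blast
    have Xj: "M ^\<^sub>m j * B \<in> carrier_mat n r" using mult_carrier_mat[OF pow_carrier_mat[OF M] B] by simp
    have "M *\<^sub>v s = col (M * (M ^\<^sub>m j * B)) b" using jb col_mult2[OF M Xj jb(2)] by simp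
    also have "\<dots> = col (M ^\<^sub>m Suc j * B) b"
      by (subst pow_Suc_left[OF M], subst assoc_mult_mat) (use M B in auto)
    finally have "M *\<^sub>v s \<in> Tset r (Suc k) M B" using jb TsetI[of "Suc j" "Suc k" b r M B] by simp
    then show "M *\<^sub>v s \<in> span (Tset r (Suc k) M B)" using T in_own_span by blast
  qed
  have 2: "B *\<^sub>v (P *\<^sub>v ?w) \<in> span (Tset r (Suc k) M B)"
  proof (rule mv_in_span[OF B _ T])
    show "P *\<^sub>v ?w \<in> carrier_vec r" using P w by auto
    show "set (cols B) \<subseteq> Tset r (Suc k) M B"
    proof
      fix v assume "v \<in> set (cols B)"
      then obtain b where b: "b < r" "v = col B b" using B by (auto simp: cols_def)
      have "col B b = col (M ^\<^sub>m 0 * B) b" using M B by simp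
      then show "v \<in> Tset r (Suc k) M B" using b TsetI[of 0 "Suc k" b r M B] by simp
    qed
  qed
  show ?case unfolding eq using span_add1[OF T 1 2] by simp
qed

lemma set_cols_ctrb:
  assumes X: "X \<in> carrier_mat n n" and B: "B \<in> carrier_mat n r" and r: "r > 0"
  shows "set (cols (ctrb n r X B)) = {col (X ^\<^sub>m j * B) a | j a. j < n \<and> a < r}"
proof -
  have colc: "col (ctrb n r X B) c = col (X ^\<^sub>m (c div r) * B) (c mod r)" if "c < n * r" for c
    using that X B r by (auto simp: ctrb_def intro!: eq_vecI)
  show ?thesis
  proof (intro Set.set_eqI iffI)
    fix v assume "v \<in> set (cols (ctrb n r X B))"
    then obtain c where c: "c < n * r" "v = col (ctrb n r X B) c" by (auto simp: cols_def ctrb_def)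
    have "c div r < n" using c(1) r by (simp add: less_mult_imp_div_less)
    then have "v = col (X ^\<^sub>m (c div r) * B) (c mod r) \<and> c div r < n \<and> c mod r < r"
      using colc[OF c(1)] c r by auto
    then show "v \<in> {col (X ^\<^sub>m j * B) a | j a. j < n \<and> a < r}" by blast
  next
    fix v assume "v \<in> {col (X ^\<^sub>m j * B) a | j a. j < n \<and> a < r}"
    then obtain j a where ja: "j < n" "a < r" "v = col (X ^\<^sub>m j * B) a" by blast
    let ?c = "j * r + a"
    have c: "?c < n * r"
    proof -
      have "j * r + a < j * r + r" using ja by simp
      also have "\<dots> = Suc j * r" by simp
      also have "\<dots> \<le> n * r" using ja(1) by (intro mult_le_mono1) simp
      finally show ?thesis .
    qed
    have "?c div r = j" "?c mod r = a" using ja r by auto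
    hence "v = col (ctrb n r X B) ?c" using colc[OF c] ja by simp
    moreover have "dim_col (ctrb n r X B) = n * r" by (simp add: ctrb_def)
    ultimately show "v \<in> set (cols (ctrb n r X B))" unfolding cols_def using c by auto
  qed
qed

lemma ctrb_carrier: "ctrb n r X B \<in> carrier_mat n (n * r)" by (auto simp: ctrb_def)

lemma ctrb_incl:
  assumes M: "M \<in> carrier_mat n n" and B: "B \<in> carrier_mat n r" and P: "P \<in> carrier_mat r n" and r: "r > 0"
  shows "set (cols (ctrb n r (M + B * P) B)) \<subseteq> span (set (cols (ctrb n r M B)))"
proof
  have M': "M + B * P \<in> carrier_mat n n" using M B P by auto
  fix v assume "v \<in> set (cols (ctrb n r (M + B * P) B))"
  then obtain j a where ja: "j < n" "a < r" "v = col ((M + B * P) ^\<^sub>m j * B) a"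
    using set_cols_ctrb[OF M' B r] by blast
  have "v \<in> span (Tset r j M B)" using ctrb_step[OF M B P ja(1,2)] ja by simp
  moreover have "span (Tset r j M B) \<subseteq> span (set (cols (ctrb n r M B)))"
  proof (rule span_subsetI)
    show "set (cols (ctrb n r M B)) \<subseteq> carrier_vec n" using cols_dim[of "ctrb n r M B"] by (simp add: ctrb_def)
    have "Tset r j M B \<subseteq> set (cols (ctrb n r M B))"
    proof
      fix x assume "x \<in> Tset r j M B"
      then obtain j' a' where "j' \<le> j" "a' < r" "x = col (M ^\<^sub>m j' * B) a'" unfolding Tset_def by blast
      then have "x = col (M ^\<^sub>m j' * B) a' \<and> j' < n \<and> a' < r" using ja(1) by auto
      then show "x \<in> set (cols (ctrb n r M B))" unfolding set_cols_ctrb[OF M B r] by blast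
    qed
    then show "Tset r j M B \<subseteq> span (set (cols (ctrb n r M B)))"
      using \<open>set (cols (ctrb n r M B)) \<subseteq> carrier_vec n\<close> in_own_span by blast
  qed
  ultimately show "v \<in> span (set (cols (ctrb n r M B)))" by blast
qed

lemma rank_ctrb_add:
  assumes M: "M \<in> carrier_mat n n" and B: "B \<in> carrier_mat n r" and P: "P \<in> carrier_mat r n" and r: "r > 0"
  shows "rank (ctrb n r (M + B * P) B) = rank (ctrb n r M B)"
proof -
  have M': "M + B * P \<in> carrier_mat n n" using M B P by auto
  have P': "(-1) \<cdot>\<^sub>m P \<in> carrier_mat r n" using P by auto
  have eq: "(M + B * P) + B * ((-1) \<cdot>\<^sub>m P) = M"
    using M B P by (subst mult_smult_distrib[OF B P]) (auto intro!: eq_matI)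
  show ?thesis
    apply (rule rank_eq_spans[OF ctrb_carrier ctrb_carrier])
     apply (rule ctrb_incl[OF M B P r])
    using ctrb_incl[OF M' B P' r] eq by simp
qed

end

lemma Delta_add:
  assumes M: "M \<in> carrier_mat n n" and B: "B \<in> carrier_mat n r" and P: "P \<in> carrier_mat r n"
  shows "Delta n A2 A3 (M + B * P) l = Delta n A2 A3 M l + B * ((-(l * exp (- l))) \<cdot>\<^sub>m P)"
  using M B P by (subst mult_smult_distrib[OF B P])
    (auto intro!: eq_matI simp: Delta_def exp_int_def algebra_simps)

lemma Delta_carrier: "M \<in> carrier_mat n n \<Longrightarrow> Delta n A2 A3 M l \<in> carrier_mat n n"
  by (auto simp: Delta_def exp_int_def)


theorem lemma2:
  fixes n r :: nat and Am1 B :: "real mat" and A2 A3 :: "real \<Rightarrow> complex mat"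
  assumes "n \<ge> 1" and "r \<ge> 1"
    and "Am1 \<in> carrier_mat n n" and "B \<in> carrier_mat n r"
    and "L2_matfun n A2" and "L2_matfun n A3"
    and "cond_i n A2 A3 (map_mat complex_of_real Am1) (map_mat complex_of_real B)"
    and "cond_ii n r (map_mat complex_of_real Am1) (map_mat complex_of_real B)"
  shows "\<forall>P \<in> carrier_mat r n.
           cond_i n A2 A3 (map_mat complex_of_real Am1 + map_mat complex_of_real B * P) (map_mat complex_of_real B)
         \<and> cond_ii n r (map_mat complex_of_real Am1 + map_mat complex_of_real B * P) (map_mat complex_of_real B)"
proof
  interpret V: vec_space "TYPE(complex)" n .
  fix P :: "complex mat" assume P: "P \<in> carrier_mat r n"
  let ?M = "map_mat complex_of_real Am1"
  let ?B = "map_mat complex_of_real B"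
  have M: "?M \<in> carrier_mat n n" using assms(3) by auto
  have Bc: "?B \<in> carrier_mat n r" using assms(4) by auto
  have r: "r > 0" using assms(2) by simp
  have ci: "cond_i n A2 A3 (?M + ?B * P) ?B"
    unfolding cond_i_def
  proof
    fix l :: complex
    have Q: "(-(l * exp (- l))) \<cdot>\<^sub>m P \<in> carrier_mat r n" using P by simp
    have "V.rank (hjoin (Delta n A2 A3 (?M + ?B * P) l) ?B)
        = V.rank (hjoin (Delta n A2 A3 ?M l + ?B * ((-(l * exp (- l))) \<cdot>\<^sub>m P)) ?B)"
      by (simp only: Delta_add[OF M Bc P])
    also have "\<dots> = V.rank (hjoin (Delta n A2 A3 ?M l) ?B)"
      by (rule V.rank_hjoin_add[OF Delta_carrier[OF M] Bc Q])
    also have "\<dots> = n" using assms(7) unfolding cond_i_def by blast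
    finally show "V.rank (hjoin (Delta n A2 A3 (?M + ?B * P) l) ?B) = n" .
  qed
  have cii: "cond_ii n r (?M + ?B * P) ?B"
    using assms(8) V.rank_ctrb_add[OF M Bc P r] unfolding cond_ii_def by simp
  show "cond_i n A2 A3 (?M + ?B * P) ?B \<and> cond_ii n r (?M + ?B * P) ?B" using ci cii by blast
qed

end
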